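(* Let $\mathcal{X}$ be a finite set with $|\mathcal{X}|=r\geq 2$, let $P_X$ be a probability mass function on $\mathcal{X}$ with $P_X(x)>0$ for all $x$, let $f:\mathcal{X}\to\mathcal{Z}=\{0,1\}$ be a given mapping, and fix an integer $l$ with $1\leq l<r$. Then for every $0\leq\rho\leq 1$, the list $\rho$-privacy satisfies $$\pi^{(l)}(\rho)=\pi_u^{(l)}(\rho)=1-\Big[P_X(\Lambda_\rho)+\rho\sum_{i\in\{0,1\}}P_X\big([f^{-1}(i)\setminus\Lambda_\rho]_{l-|\Lambda_\rho|}\big)\Big],$$ and this value is achieved by an add-noise $\rho$-QR.
   Context: Notation: $f^{-1}(i)=\{x\in\mathcal{X}: f(x)=i\}$. For $A\subseteq\mathcal{X}$ and $0\leq t\leq|A|$, $[A]_t$ denotes a set of $t$ largest $P_X$-probability elements of $A$ (ties broken arbitrarily), with $[A]_0=\emptyset$. For a set $S$, $P_X(S)=\sum_{x\in S}P_X(x)$. A $\rho$-QR ($0\leq\rho\leq1$) is a stochastic matrix $W:\mathcal{X}\to\mathcal{Z}$ with $W(f(x)|x)\geq\rho$ for all $x\in\mathcal{X}$; equivalently a $\mathcal{Z}$-valued random variable $F(X)$ with $P(F(X)=i\mid X=x)=W(i|x)$, $X\sim P_X$. With $\mathcal{L}_l$ the set of $l$-element subsets of $\mathcal{X}$, the list privacy of $W$ is $\pi^{(l)}_\rho(W)=\min_{g:\mathcal{Z}\to\mathcal{L}_l}P(X\notin g(F(X)))=1-\sum_{i\in\mathcal{Z}}\max_{L\in\mathcal{L}_l}\sum_{x\in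 L}P_X(x)W(i|x)$, and list $\rho$-privacy is $\pi^{(l)}(\rho)=\max\{\pi^{(l)}_\rho(W): W\text{ a }\rho\text{-QR}\}$. $\pi_u^{(l)}(\rho)$ is defined as $1-\big[P_X(\Lambda_\rho)+\rho\sum_{i\in\mathcal{Z}}P_X([f^{-1}(i)\setminus\Lambda_\rho]_{\min\{l-|\Lambda_\rho|,|f^{-1}(i)\setminus\Lambda_\rho|\}})\big]$, where $\Lambda_\rho$ denotes a maximizer (not necessarily unique) over subsets $\Lambda\subset\mathcal{X}$ with $0\leq|\Lambda|\leq l$ of $P_X(\Lambda)+\rho\sum_{i\in\mathcal{Z}}P_X\big([f^{-1}(i)\setminus\Lambda]_{\min\{l-|\Lambda|,\,|f^{-1}(i)\setminus\Lambda|\}}\big)$. An add-noise $\rho$-QR is a $\rho$-QR of the form $F(X)=f(X)+N \bmod k$ (here $k=|\mathcal{Z}|=2$), where $N$ is a $\mathcal{Z}$-valued random variable such that $N - f(X) - X$ is a Markov chain; equivalently, its stochastic matrix $W$ has identical rows $W(\cdot|x)$ for all $x$ in the same set $f^{-1}(i)$, $i\in\mathcal{Z}$. *)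

theory Defs
  imports Complex_Main
begin

definition Zset :: "nat set" where "Zset = {0, 1}"

definition preim :: "'a set \<Rightarrow> ('a \<Rightarrow> nat) \<Rightarrow> nat \<Rightarrow> 'a set" where
  "preim X f i = {x \<in> X. f x = i}"

text \<open>For t greater than card A we take all of A (only used with t \<le> card A in the definition
  of pi_u, where the index is min (l - |Lambda|) |f^{-1}(i) - Lambda|).\<close>
definition top_set :: "('a \<Rightarrow> real) \<Rightarrow> 'a set \<Rightarrow> nat \<Rightarrow> 'a set" where
  "top_set P A t = (SOME S. S \<subseteq> A \<and> card S = min t (card A) \<and>
                            (\<forall>x\<in>S. \<forall>y\<in>A - S. P y \<le> P x))"

definition is_QR :: "'a set \<Rightarrow> ('a \<Rightarrow> nat) \<Rightarrow> real \<Rightarrow> ('a \<Rightarrow> nat \<Rightarrow> real) \<Rightarrow> bool" where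
  "is_QR X f \<rho> W \<longleftrightarrow>
     (\<forall>x\<in>X. (\<forall>i\<in>Zset. 0 \<le> W x i) \<and> (\<Sum>i\<in>Zset. W x i) = 1 \<and> \<rho> \<le> W x (f x))"

definition is_addnoise_QR :: "'a set \<Rightarrow> ('a \<Rightarrow> nat) \<Rightarrow> real \<Rightarrow> ('a \<Rightarrow> nat \<Rightarrow> real) \<Rightarrow> bool" where
  "is_addnoise_QR X f \<rho> W \<longleftrightarrow> is_QR X f \<rho> W \<and>
     (\<forall>x\<in>X. \<forall>y\<in>X. f x = f y \<longrightarrow> (\<forall>i\<in>Zset. W x i = W y i))"

definition list_privacy_W :: "'a set \<Rightarrow> ('a \<Rightarrow> real) \<Rightarrow> nat \<Rightarrow> ('a \<Rightarrow> nat \<Rightarrow> real) \<Rightarrow> real" where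
  "list_privacy_W X P l W =
     1 - (\<Sum>i\<in>Zset. Max {(\<Sum>x\<in>L. P x * W x i) | L. L \<subseteq> X \<and> card L = l})"

definition list_privacy :: "'a set \<Rightarrow> ('a \<Rightarrow> real) \<Rightarrow> ('a \<Rightarrow> nat) \<Rightarrow> nat \<Rightarrow> real \<Rightarrow> real" where
  "list_privacy X P f l \<rho> = Sup {list_privacy_W X P l W | W. is_QR X f \<rho> W}"

definition Jobj :: "'a set \<Rightarrow> ('a \<Rightarrow> real) \<Rightarrow> ('a \<Rightarrow> nat) \<Rightarrow> nat \<Rightarrow> real \<Rightarrow> 'a set \<Rightarrow> real" where
  "Jobj X P f l \<rho> \<Lambda> = sum P \<Lambda> + \<rho> * (\<Sum>i\<in>Zset.
       sum P (top_set P (preim X f i - \<Lambda>) (min (l - card \<Lambda>) (card (preim X f i - \<Lambda>)))))"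

definition is_Lambda_rho :: "'a set \<Rightarrow> ('a \<Rightarrow> real) \<Rightarrow> ('a \<Rightarrow> nat) \<Rightarrow> nat \<Rightarrow> real \<Rightarrow> 'a set \<Rightarrow> bool" where
  "is_Lambda_rho X P f l \<rho> \<Lambda> \<longleftrightarrow> \<Lambda> \<subset> X \<and> card \<Lambda> \<le> l \<and>
     (\<forall>\<Lambda>'. \<Lambda>' \<subset> X \<and> card \<Lambda>' \<le> l \<longrightarrow> Jobj X P f l \<rho> \<Lambda>' \<le> Jobj X P f l \<rho> \<Lambda>)"

definition Lambda_rho :: "'a set \<Rightarrow> ('a \<Rightarrow> real) \<Rightarrow> ('a \<Rightarrow> nat) \<Rightarrow> nat \<Rightarrow> real \<Rightarrow> 'a set" where
  "Lambda_rho X P f l \<rho> = (SOME \<Lambda>. is_Lambda_rho X P f l \<rho> \<Lambda>)"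

definition pi_u :: "'a set \<Rightarrow> ('a \<Rightarrow> real) \<Rightarrow> ('a \<Rightarrow> nat) \<Rightarrow> nat \<Rightarrow> real \<Rightarrow> real" where
  "pi_u X P f l \<rho> = 1 - Jobj X P f l \<rho> (Lambda_rho X P f l \<rho>)"

end

theory Submission
  imports Defs
begin

lemma sum_Zset: "(\<Sum>i\<in>Zset. g i) = g 0 + g 1"
  by (simp add: Zset_def)

lemma top_exists:
  fixes P :: "'a \<Rightarrow> real"
  assumes "finite A"
  shows "\<exists>S. S \<subseteq> A \<and> card S = min t (card A) \<and> (\<forall>x\<in>S. \<forall>y\<in>A - S. P y \<le> P x)"
proof (induction t)
  case 0
  then show ?case by (intro exI[of _ "{}"]) auto
next
  case (Suc t)
  then obtain S where S: "S \<subseteq> A" "card S = min t (card A)" "\<forall>x\<in>S. \<forall>y\<in>A - S. P y \<le> P x" by blast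
  show ?case
  proof (cases "card S = card A")
    case True
    then have "S = A" by (rule card_subset_eq[OF assms S(1)])
    then show ?thesis using True S by (intro exI[of _ S]) auto
  next
    case False
    then have ct: "card S = t" "t < card A" using S by auto
    have fin: "finite (A - S)" using assms by auto
    have ne: "A - S \<noteq> {}"
    proof
      assume "A - S = {}"
      then have "A = S" using S by auto
      then show False using ct by simp
    qed
    define m where "m = Max (P ` (A - S))"
    have "m \<in> P ` (A - S)" unfolding m_def using fin ne by auto
    then obtain z where z: "z \<in> A - S" "P z = m" by auto
    have zmax: "\<forall>y\<in>A - S. P y \<le> P z" using z fin unfolding m_def by auto
    have fS: "finite S" using S(1) assms by (rule finite_subset)
    show ?thesis
    proof (intro exI[of _ "insert z S"] conjI)
      show "insert z S \<subseteq> A" using S z by auto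
      show "card (insert z S) = min (Suc t) (card A)" using ct z fS by auto
      show "\<forall>x\<in>insert z S. \<forall>y\<in>A - insert z S. P y \<le> P x" using S zmax by auto
    qed
  qed
qed

lemma top_set_props:
  fixes P :: "'a \<Rightarrow> real"
  assumes "finite A"
  shows "top_set P A t \<subseteq> A" "card (top_set P A t) = min t (card A)"
    "\<forall>x\<in>top_set P A t. \<forall>y\<in>A - top_set P A t. P y \<le> P x"
proof -
  have "\<exists>S. S \<subseteq> A \<and> card S = min t (card A) \<and> (\<forall>x\<in>S. \<forall>y\<in>A - S. P y \<le> P x)"
    using top_exists[OF assms] .
  from someI_ex[OF this] show "top_set P A t \<subseteq> A" "card (top_set P A t) = min t (card A)"
    "\<forall>x\<in>top_set P A t. \<forall>y\<in>A - top_set P A t. P y \<le> P x" unfolding top_set_def by blast+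
qed

lemma top_opt_aux:
  fixes P :: "'a \<Rightarrow> real"
  assumes "finite A" "\<forall>x\<in>A. 0 \<le> P x" "S \<subseteq> A" "\<forall>x\<in>S. \<forall>y\<in>A - S. P y \<le> P x"
  shows "S' \<subseteq> A \<Longrightarrow> card S' \<le> card S \<Longrightarrow> card (S' - S) = n \<Longrightarrow> sum P S' \<le> sum P S"
proof (induction n arbitrary: S' rule: less_induct)
  case (less n)
  have fS: "finite S" "finite S'" using finite_subset[OF less.prems(1) assms(1)] finite_subset[OF assms(3) assms(1)] by auto
  show ?case
  proof (cases "S' - S = {}")
    case True
    then have "S' \<subseteq> S" by auto
    then show ?thesis using fS assms less.prems by (intro sum_mono2) auto
  next
    case False
    then obtain y where y: "y \<in> S'" "y \<notin> S" by auto
    have "\<not> S \<subseteq> S'"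
    proof
      assume "S \<subseteq> S'"
      then show False using y card_seteq[OF fS(2) \<open>S \<subseteq> S'\<close> less.prems(2)] by simp
    qed
    then obtain x where x: "x \<in> S" "x \<notin> S'" by auto
    have Pyx: "P y \<le> P x" using assms(4) x(1) y less.prems(1) by blast
    define S'' where "S'' = insert x (S' - {y})"
    have cd: "card (S' - {y}) = card S' - 1" using y(1) by (rule card_Diff_singleton)
    have cpos: "card S' > 0" using fS(2) y(1) card_gt_0_iff by blast
    have "card S'' = Suc (card (S' - {y}))" unfolding S''_def
      by (rule card_insert_disjoint) (use fS x in auto)
    then have c1: "card S'' = card S'" using cd cpos by simp
    have "S'' - S = (S' - S) - {y}" unfolding S''_def using x by auto
    moreover have "card ((S' - S) - {y}) < card (S' - S)"
      by (rule card_Diff1_less) (use fS y in auto)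
    ultimately have c2: "card (S'' - S) < n" using less.prems by simp
    have "sum P S'' = P x + sum P (S' - {y})" unfolding S''_def
      by (rule sum.insert) (use fS x in auto)
    moreover have "sum P (S' - {y}) = sum P S' - P y" using fS(2) y(1) by (simp add: sum_diff1)
    ultimately have "sum P S'' = sum P S' - P y + P x" by simp
    moreover have "sum P S'' \<le> sum P S"
    proof (rule less.IH[OF c2 _ _ refl])
      show "S'' \<subseteq> A" unfolding S''_def using less.prems(1) x(1) assms(3) by blast
      show "card S'' \<le> card S" using c1 less.prems(2) by simp
    qed
    ultimately show ?thesis using Pyx by linarith
  qed
qed

lemma top_opt:
  fixes P :: "'a \<Rightarrow> real"
  assumes "finite A" "\<forall>x\<in>A. 0 \<le> P x" "S' \<subseteq> A" "card S' \<le> t"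
  shows "sum P S' \<le> sum P (top_set P A t)"
proof -
  have "card S' \<le> card A" using assms card_mono by auto
  then have "card S' \<le> card (top_set P A t)" using top_set_props(2)[OF assms(1)] assms by auto
  then show ?thesis using top_opt_aux[OF assms(1,2) top_set_props(1,3)[OF assms(1)] assms(3)] by auto
qed


lemma Jlow:
  fixes P :: "'a \<Rightarrow> real"
  assumes "finite X" "\<forall>x\<in>X. 0 \<le> P x" "0 \<le> \<rho>"
    "B0 \<subseteq> preim X f 0 - \<Lambda>" "B1 \<subseteq> preim X f 1 - \<Lambda>"
    "card B0 \<le> l - card \<Lambda>" "card B1 \<le> l - card \<Lambda>"
  shows "sum P \<Lambda> + \<rho> * (sum P B0 + sum P B1) \<le> Jobj X P f l \<rho> \<Lambda>"
proof -
  have fin: "finite (preim X f i - \<Lambda>)" for i using assms(1) unfolding preim_def by auto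
  have nn: "\<forall>x\<in>preim X f i - \<Lambda>. 0 \<le> P x" for i using assms(2) unfolding preim_def by auto
  have c0: "card B0 \<le> min (l - card \<Lambda>) (card (preim X f 0 - \<Lambda>))"
    using assms(4,6) card_mono[OF fin] by auto
  have c1: "card B1 \<le> min (l - card \<Lambda>) (card (preim X f 1 - \<Lambda>))"
    using assms(5,7) card_mono[OF fin] by auto
  have "sum P B0 \<le> sum P (top_set P (preim X f 0 - \<Lambda>) (min (l - card \<Lambda>) (card (preim X f 0 - \<Lambda>))))"
    by (rule top_opt[OF fin nn assms(4) c0])
  moreover have "sum P B1 \<le> sum P (top_set P (preim X f 1 - \<Lambda>) (min (l - card \<Lambda>) (card (preim X f 1 - \<Lambda>))))"
    by (rule top_opt[OF fin nn assms(5) c1])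
  ultimately show ?thesis unfolding Jobj_def sum_Zset using assms(3)
    by (smt (verit, best) distrib_left mult_left_mono)
qed

definition Wc :: "real \<Rightarrow> ('a \<Rightarrow> nat) \<Rightarrow> 'a \<Rightarrow> nat \<Rightarrow> real" where
  "Wc c f x i = (if i = f x then c else 1 - c)"

lemma key_ineq:
  fixes a b r :: real
  assumes "0 \<le> a" "0 \<le> b" "1/2 \<le> r" "r \<le> 1" "fx \<in> Zset" "fy \<in> Zset" "\<not> (fx = 0 \<and> fy = 1)"
  shows "a * (if 0 = fx then r else 1 - r) \<le> b * (if 0 = fy then r else 1 - r)
       \<or> b * (if 1 = fy then r else 1 - r) \<le> a * (if 1 = fx then r else 1 - r)"
proof (cases "a \<le> b")
  case True
  have "a * (1 - r) \<le> b * (1 - r)" "a * r \<le> b * r" "a * (1-r) \<le> a * r" "b * (1-r) \<le> b * r"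
    using True assms by (auto intro: mult_right_mono mult_left_mono)
  then show ?thesis using assms(5,6,7) unfolding Zset_def by auto
next
  case False
  have "b * (1 - r) \<le> a * (1 - r)" "b * r \<le> a * r" "a * (1-r) \<le> a * r" "b * (1-r) \<le> b * r"
    using False assms by (auto intro: mult_right_mono mult_left_mono)
  then show ?thesis using assms(5,6,7) unfolding Zset_def by auto
qed

lemma exch:
  fixes P :: "'a \<Rightarrow> real"
  assumes "finite X" "\<forall>x\<in>X. 0 \<le> P x" "\<forall>x\<in>X. f x \<in> Zset" "1/2 \<le> \<rho>" "\<rho> \<le> 1"
  shows "L0 \<subseteq> X \<Longrightarrow> L1 \<subseteq> X \<Longrightarrow> card L0 = card L1 \<Longrightarrow> card (L0 - L1) = n \<Longrightarrow>
    \<exists>\<Lambda> B0 B1. \<Lambda> \<subseteq> X \<and> card \<Lambda> \<le> card L0 \<and> B0 \<subseteq> preim X f 0 - \<Lambda> \<and> B1 \<subseteq> preim X f 1 - \<Lambda>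
      \<and> card B0 \<le> card L0 - card \<Lambda> \<and> card B1 \<le> card L0 - card \<Lambda>
      \<and> (\<Sum>x\<in>L0. P x * Wc \<rho> f x 0) + (\<Sum>x\<in>L1. P x * Wc \<rho> f x 1)
         \<le> sum P \<Lambda> + \<rho> * (sum P B0 + sum P B1)"
proof (induction n arbitrary: L0 L1 rule: less_induct)
  case (less n)
  define g0 where "g0 = (\<lambda>x. P x * Wc \<rho> f x 0)"
  define g1 where "g1 = (\<lambda>x. P x * Wc \<rho> f x 1)"
  have fin: "finite L0" "finite L1" using less.prems assms(1) finite_subset by auto
  define \<Lambda> where "\<Lambda> = L0 \<inter> L1"
  have e0: "L0 = \<Lambda> \<union> (L0 - L1)" "\<Lambda> \<inter> (L0 - L1) = {}" unfolding \<Lambda>_def by auto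
  have e1: "L1 = \<Lambda> \<union> (L1 - L0)" "\<Lambda> \<inter> (L1 - L0) = {}" unfolding \<Lambda>_def by auto
  have finL: "finite \<Lambda>" unfolding \<Lambda>_def using fin by auto
  have cc0: "card L0 = card \<Lambda> + card (L0 - L1)" using e0 fin finL
    by (metis card_Un_disjoint finite_Diff)
  have cc1: "card L1 = card \<Lambda> + card (L1 - L0)" using e1 fin finL
    by (metis card_Un_disjoint finite_Diff)
  have cB: "card (L1 - L0) = n" using cc0 cc1 less.prems by auto
  show ?case
  proof (cases "(\<forall>x\<in>L0 - L1. f x = 0) \<and> (\<forall>y\<in>L1 - L0. f y = 1)")
    case True
    have s0: "sum g0 L0 = sum g0 \<Lambda> + \<rho> * sum P (L0 - L1)"
    proof -
      have "sum g0 L0 = sum g0 \<Lambda> + sum g0 (L0 - L1)" using e0 fin finL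
        by (metis finite_Diff sum.union_disjoint)
      moreover have "sum g0 (L0 - L1) = (\<Sum>x\<in>L0 - L1. \<rho> * P x)"
        using True unfolding g0_def Wc_def by (intro sum.cong) auto
      ultimately show ?thesis by (simp add: sum_distrib_left)
    qed
    have s1: "sum g1 L1 = sum g1 \<Lambda> + \<rho> * sum P (L1 - L0)"
    proof -
      have "sum g1 L1 = sum g1 \<Lambda> + sum g1 (L1 - L0)" using e1 fin finL
        by (metis finite_Diff sum.union_disjoint)
      moreover have "sum g1 (L1 - L0) = (\<Sum>x\<in>L1 - L0. \<rho> * P x)"
        using True unfolding g1_def Wc_def by (intro sum.cong) auto
      ultimately show ?thesis by (simp add: sum_distrib_left)
    qed
    have sl: "sum g0 \<Lambda> + sum g1 \<Lambda> = sum P \<Lambda>"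
    proof -
      have "sum g0 \<Lambda> + sum g1 \<Lambda> = (\<Sum>x\<in>\<Lambda>. g0 x + g1 x)" by (simp add: sum.distrib)
      also have "\<dots> = sum P \<Lambda>"
      proof (intro sum.cong refl)
        fix x assume "x \<in> \<Lambda>"
        then have "f x \<in> Zset" using assms(3) less.prems unfolding \<Lambda>_def by auto
        then show "g0 x + g1 x = P x" unfolding g0_def g1_def Wc_def Zset_def
          by (auto simp: algebra_simps)
      qed
      finally show ?thesis .
    qed
    have h1: "\<Lambda> \<subseteq> X" using less.prems unfolding \<Lambda>_def by auto
    have h2: "card \<Lambda> \<le> card L0" using cc0 by auto
    have h3: "L0 - L1 \<subseteq> preim X f 0 - \<Lambda>" using True less.prems unfolding preim_def \<Lambda>_def by auto
    have h4: "L1 - L0 \<subseteq> preim X f 1 - \<Lambda>" using True less.prems unfolding preim_def \<Lambda>_def by auto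
    have h5: "card (L0 - L1) \<le> card L0 - card \<Lambda>" using cc0 by auto
    have h6: "card (L1 - L0) \<le> card L0 - card \<Lambda>" using cc0 cB less.prems by auto
    have h7: "(\<Sum>x\<in>L0. P x * Wc \<rho> f x 0) + (\<Sum>x\<in>L1. P x * Wc \<rho> f x 1)
         \<le> sum P \<Lambda> + \<rho> * (sum P (L0 - L1) + sum P (L1 - L0))"
        using s0 s1 sl unfolding g0_def g1_def by (simp add: algebra_simps)
    show ?thesis using h1 h2 h3 h4 h5 h6 h7 by blast
  next
    case False
    have "n \<noteq> 0"
    proof
      assume "n = 0"
      then have "L0 - L1 = {}" "L1 - L0 = {}" using less.prems cB fin by auto
      then show False using False by auto
    qed
    have "\<exists>x\<in>L0 - L1. \<exists>y\<in>L1 - L0. \<not> (f x = 0 \<and> f y = 1)"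
    proof -
      have "card (L0 - L1) \<noteq> 0" "card (L1 - L0) \<noteq> 0" using \<open>n \<noteq> 0\<close> less.prems cB by auto
      then have ne0: "L0 - L1 \<noteq> {}" "L1 - L0 \<noteq> {}" by (metis card.empty)+
      have "\<not> (\<forall>x\<in>L0 - L1. f x = 0) \<or> \<not> (\<forall>y\<in>L1 - L0. f y = 1)" using False by blast
      then show ?thesis
      proof
        assume "\<not> (\<forall>x\<in>L0 - L1. f x = 0)"
        then obtain x where "x \<in> L0 - L1" "f x \<noteq> 0" by auto
        moreover obtain y where "y \<in> L1 - L0" using ne0 by auto
        ultimately show ?thesis by auto
      next
        assume "\<not> (\<forall>y\<in>L1 - L0. f y = 1)"
        then obtain y where "y \<in> L1 - L0" "f y \<noteq> 1" by auto
        moreover obtain x where "x \<in> L0 - L1" using ne0 by auto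
        ultimately show ?thesis by auto
      qed
    qed
    then obtain x y where x: "x \<in> L0" "x \<notin> L1" and y: "y \<in> L1" "y \<notin> L0"
      and xy: "\<not> (f x = 0 \<and> f y = 1)" by auto
    have fxy: "f x \<in> Zset" "f y \<in> Zset" using x y less.prems assms(3) by auto
    have Pxy: "0 \<le> P x" "0 \<le> P y" using x y less.prems assms(2) by auto
    have "g0 x \<le> g0 y \<or> g1 y \<le> g1 x"
      using key_ineq[OF Pxy assms(4,5) fxy xy] unfolding g0_def g1_def Wc_def by auto
    then show ?thesis
    proof
      assume le: "g0 x \<le> g0 y"
      define L0' where "L0' = insert y (L0 - {x})"
      have L0'X: "L0' \<subseteq> X" using less.prems y unfolding L0'_def by auto
      have cL0': "card L0' = card L0" unfolding L0'_def using fin x y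
        by (simp add: card_Suc_Diff1) (metis card_0_eq empty_iff Suc_pred neq0_conv)
      have "L0' - L1 = (L0 - L1) - {x}" unfolding L0'_def using y by auto
      then have lt: "card (L0' - L1) < n" using less.prems x fin
        by (metis Diff_iff card_Diff1_less finite_Diff)
      have sg1: "sum g0 L0' = g0 y + sum g0 (L0 - {x})" unfolding L0'_def
        by (rule sum.insert) (use fin y in auto)
      have sg2: "sum g0 (L0 - {x}) = sum g0 L0 - g0 x" using fin(1) x(1) by (simp add: sum_diff1)
      have sg: "sum g0 L0' = sum g0 L0 - g0 x + g0 y" using sg1 sg2 by simp
      have ih: "\<exists>\<Lambda> B0 B1. \<Lambda> \<subseteq> X \<and> card \<Lambda> \<le> card L0' \<and> B0 \<subseteq> preim X f 0 - \<Lambda> \<and> B1 \<subseteq> preim X f 1 - \<Lambda>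
      \<and> card B0 \<le> card L0' - card \<Lambda> \<and> card B1 \<le> card L0' - card \<Lambda>
      \<and> sum g0 L0' + sum g1 L1 \<le> sum P \<Lambda> + \<rho> * (sum P B0 + sum P B1)"
        unfolding g0_def g1_def
        by (rule less.IH[OF lt L0'X less.prems(2) _ refl]) (use cL0' less.prems(3) in simp)
      then obtain \<Lambda>' B0 B1 where H: "\<Lambda>' \<subseteq> X" "card \<Lambda>' \<le> card L0'" "B0 \<subseteq> preim X f 0 - \<Lambda>'"
        "B1 \<subseteq> preim X f 1 - \<Lambda>'" "card B0 \<le> card L0' - card \<Lambda>'" "card B1 \<le> card L0' - card \<Lambda>'"
        "sum g0 L0' + sum g1 L1 \<le> sum P \<Lambda>' + \<rho> * (sum P B0 + sum P B1)" by blast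
      have H7: "sum g0 L0 + sum g1 L1 \<le> sum P \<Lambda>' + \<rho> * (sum P B0 + sum P B1)"
        using H(7) sg le by linarith
      show ?thesis unfolding g0_def[symmetric] g1_def[symmetric]
        using H(1-6) H7 unfolding cL0' by blast
    next
      assume le: "g1 y \<le> g1 x"
      define L1' where "L1' = insert x (L1 - {y})"
      have L1'X: "L1' \<subseteq> X" using less.prems x unfolding L1'_def by auto
      have cL1': "card L1' = card L1" unfolding L1'_def using fin x y
        by (simp add: card_Suc_Diff1) (metis card_0_eq empty_iff Suc_pred neq0_conv)
      have "L0 - L1' = (L0 - L1) - {x}" unfolding L1'_def using y by auto
      then have lt: "card (L0 - L1') < n" using less.prems x fin
        by (metis Diff_iff card_Diff1_less finite_Diff)
      have sg1: "sum g1 L1' = g1 x + sum g1 (L1 - {y})" unfolding L1'_def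
        by (rule sum.insert) (use fin x in auto)
      have sg2: "sum g1 (L1 - {y}) = sum g1 L1 - g1 y" using fin(2) y(1) by (simp add: sum_diff1)
      have sg: "sum g1 L1' = sum g1 L1 - g1 y + g1 x" using sg1 sg2 by simp
      have ih: "\<exists>\<Lambda> B0 B1. \<Lambda> \<subseteq> X \<and> card \<Lambda> \<le> card L0 \<and> B0 \<subseteq> preim X f 0 - \<Lambda> \<and> B1 \<subseteq> preim X f 1 - \<Lambda>
      \<and> card B0 \<le> card L0 - card \<Lambda> \<and> card B1 \<le> card L0 - card \<Lambda>
      \<and> sum g0 L0 + sum g1 L1' \<le> sum P \<Lambda> + \<rho> * (sum P B0 + sum P B1)"
        unfolding g0_def g1_def
        by (rule less.IH[OF lt less.prems(1) L1'X _ refl]) (use cL1' less.prems(3) in simp)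
      then obtain \<Lambda>' B0 B1 where H: "\<Lambda>' \<subseteq> X" "card \<Lambda>' \<le> card L0" "B0 \<subseteq> preim X f 0 - \<Lambda>'"
        "B1 \<subseteq> preim X f 1 - \<Lambda>'" "card B0 \<le> card L0 - card \<Lambda>'" "card B1 \<le> card L0 - card \<Lambda>'"
        "sum g0 L0 + sum g1 L1' \<le> sum P \<Lambda>' + \<rho> * (sum P B0 + sum P B1)" by blast
      have H7: "sum g0 L0 + sum g1 L1 \<le> sum P \<Lambda>' + \<rho> * (sum P B0 + sum P B1)"
        using H(7) sg le by linarith
      show ?thesis unfolding g0_def[symmetric] g1_def[symmetric]
        using H(1-6) H7 by blast
    qed
  qed
qed


lemma extend_set:
  assumes "finite X" "S \<subseteq> X" "card S \<le> l" "l \<le> card X"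
  shows "\<exists>L. S \<subseteq> L \<and> L \<subseteq> X \<and> card L = l"
proof -
  have fS: "finite S" using assms finite_subset by auto
  have "card (X - S) = card X - card S" using assms fS by (simp add: card_Diff_subset)
  then have "l - card S \<le> card (X - S)" using assms by auto
  then obtain T where T: "T \<subseteq> X - S" "card T = l - card S" "finite T"
    by (rule obtain_subset_with_card_n)
  have "card (S \<union> T) = card S + card T" using T fS by (subst card_Un_disjoint) auto
  then show ?thesis using T assms by (intro exI[of _ "S \<union> T"]) auto
qed

lemma set_eq_img:
  "{(\<Sum>x\<in>L. P x * W x i) | L. L \<subseteq> X \<and> card L = l} = (\<lambda>L. \<Sum>x\<in>L. P x * W x i) ` {L. L \<subseteq> X \<and> card L = l}"
  by auto

lemma Max_props:
  assumes "finite X" "l \<le> card X"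
  shows "finite {(\<Sum>x\<in>L. P x * W x i) | L. L \<subseteq> X \<and> card L = l}"
    "{(\<Sum>x\<in>L. P x * W x i) | L. L \<subseteq> X \<and> card L = l} \<noteq> {}"
proof -
  have "{L. L \<subseteq> X \<and> card L = l} \<subseteq> Pow X" by auto
  then have "finite {L. L \<subseteq> X \<and> card L = l}" using assms finite_subset by blast
  then show "finite {(\<Sum>x\<in>L. P x * W x i) | L. L \<subseteq> X \<and> card L = l}"
    unfolding set_eq_img by auto
  obtain T where "T \<subseteq> X" "card T = l" using assms obtain_subset_with_card_n by metis
  then show "{(\<Sum>x\<in>L. P x * W x i) | L. L \<subseteq> X \<and> card L = l} \<noteq> {}" by auto
qed

lemma top_set_min:
  "top_set P A (min t (card A)) = top_set P A t"
  unfolding top_set_def by simp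

theorem theorem2:
  fixes X :: "'a set" and P :: "'a \<Rightarrow> real" and f :: "'a \<Rightarrow> nat"
    and l :: nat and \<rho> :: real
  assumes "finite X" and "card X \<ge> 2"
    and "\<forall>x\<in>X. P x > 0" and "(\<Sum>x\<in>X. P x) = 1"
    and "\<forall>x\<in>X. f x \<in> Zset"
    and "1 \<le> l" and "l < card X"
    and "0 \<le> \<rho>" and "\<rho> \<le> 1"
  shows "list_privacy X P f l \<rho> = pi_u X P f l \<rho>
    \<and> (\<forall>\<Lambda>. is_Lambda_rho X P f l \<rho> \<Lambda> \<longrightarrow>
          pi_u X P f l \<rho> = 1 - (sum P \<Lambda> + \<rho> * (\<Sum>i\<in>Zset.
              sum P (top_set P (preim X f i - \<Lambda>) (l - card \<Lambda>)))))
    \<and> (\<exists>W. is_addnoise_QR X f \<rho> W \<and> list_privacy_W X P l W = list_privacy X P f l \<rho>)"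
proof -
  note fX = assms(1)
  have nn: "\<forall>x\<in>X. 0 \<le> P x" using assms(3) by auto
  define J where "J = Jobj X P f l \<rho>"
  define C where "C = {\<Lambda>. \<Lambda> \<subset> X \<and> card \<Lambda> \<le> l}"
  have finC: "finite C"
  proof (rule finite_subset[of _ "Pow X"])
    show "C \<subseteq> Pow X" unfolding C_def by auto
  qed (use fX in auto)
  have "X \<noteq> {}" using assms(2) by auto
  then have "{} \<in> C" unfolding C_def by auto
  then have neC: "J ` C \<noteq> {}" by auto
  have "Max (J ` C) \<in> J ` C" using finC neC by auto
  then obtain \<Lambda>0 where L0: "\<Lambda>0 \<in> C" "J \<Lambda>0 = Max (J ` C)" by auto
  have "\<forall>\<Lambda>\<in>C. J \<Lambda> \<le> J \<Lambda>0" using L0 finC by auto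
  then have "is_Lambda_rho X P f l \<rho> \<Lambda>0" using L0 unfolding is_Lambda_rho_def C_def J_def by auto
  then have hL: "is_Lambda_rho X P f l \<rho> (Lambda_rho X P f l \<rho>)"
    unfolding Lambda_rho_def by (rule someI)
  define \<Lambda>s where "\<Lambda>s = Lambda_rho X P f l \<rho>"
  define m where "m = J \<Lambda>s"
  have pu: "pi_u X P f l \<rho> = 1 - m" unfolding pi_u_def m_def J_def \<Lambda>s_def ..
  have Jmax: "\<And>\<Lambda>. \<Lambda> \<subset> X \<Longrightarrow> card \<Lambda> \<le> l \<Longrightarrow> J \<Lambda> \<le> m"
    using hL unfolding is_Lambda_rho_def m_def J_def \<Lambda>s_def by auto
  have Lsub: "\<Lambda>s \<subset> X" "card \<Lambda>s \<le> l" using hL unfolding is_Lambda_rho_def \<Lambda>s_def by auto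
  have part2: "\<forall>\<Lambda>. is_Lambda_rho X P f l \<rho> \<Lambda> \<longrightarrow>
          pi_u X P f l \<rho> = 1 - (sum P \<Lambda> + \<rho> * (\<Sum>i\<in>Zset.
              sum P (top_set P (preim X f i - \<Lambda>) (l - card \<Lambda>))))"
  proof (intro allI impI)
    fix \<Lambda> assume h: "is_Lambda_rho X P f l \<rho> \<Lambda>"
    have h1: "\<Lambda> \<subset> X" "card \<Lambda> \<le> l" using h unfolding is_Lambda_rho_def by auto
    have h2: "J \<Lambda>s \<le> J \<Lambda>" using h Lsub unfolding is_Lambda_rho_def J_def by blast
    have "J \<Lambda> = m" using Jmax[OF h1] h2 unfolding m_def by linarith
    then show "pi_u X P f l \<rho> = 1 - (sum P \<Lambda> + \<rho> * (\<Sum>i\<in>Zset.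
              sum P (top_set P (preim X f i - \<Lambda>) (l - card \<Lambda>))))"
      unfolding pu J_def Jobj_def top_set_min by linarith
  qed
  define MW where "MW = (\<lambda>W. \<Sum>i\<in>Zset. Max {(\<Sum>x\<in>L. P x * W x i) | L. L \<subseteq> X \<and> card L = l})"
  have lpW: "list_privacy_W X P l W = 1 - MW W" for W unfolding list_privacy_W_def MW_def ..
  have lX: "l \<le> card X" using assms by auto
  have LB: "m \<le> MW W" if W: "is_QR X f \<rho> W" for W
  proof -
    define T where "T = (\<lambda>i. top_set P (preim X f i - \<Lambda>s) (min (l - card \<Lambda>s) (card (preim X f i - \<Lambda>s))))"
    have finp: "finite (preim X f i - \<Lambda>s)" for i using fX unfolding preim_def by auto
    have T1: "T i \<subseteq> preim X f i - \<Lambda>s" for i unfolding T_def using top_set_props(1)[OF finp] .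
    have T2: "card (T i) \<le> l - card \<Lambda>s" for i unfolding T_def using top_set_props(2)[OF finp] by auto
    have mJ: "m = sum P \<Lambda>s + \<rho> * (sum P (T 0) + sum P (T 1))"
      unfolding m_def J_def Jobj_def T_def sum_Zset ..
    have bound: "(\<Sum>x\<in>\<Lambda>s. P x * W x i) + \<rho> * sum P (T i) \<le> Max {(\<Sum>x\<in>L. P x * W x i) | L. L \<subseteq> X \<and> card L = l}"
      if iZ: "i \<in> Zset" for i
    proof -
      have fT: "finite (T i)" "finite \<Lambda>s" using T1 finp Lsub fX finite_subset by (blast, blast)
      have dj: "\<Lambda>s \<inter> T i = {}" using T1 by auto
      have cU: "card (\<Lambda>s \<union> T i) \<le> l" using card_Un_disjoint[OF fT(2) fT(1) dj] T2[of i] Lsub by auto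
      have UX: "\<Lambda>s \<union> T i \<subseteq> X" using T1 Lsub unfolding preim_def by auto
      obtain L where L: "\<Lambda>s \<union> T i \<subseteq> L" "L \<subseteq> X" "card L = l"
        using extend_set[OF fX UX cU lX] by blast
      have finL: "finite L" using L fX finite_subset by auto
      have Wnn: "\<forall>x\<in>X. 0 \<le> W x i" using W iZ unfolding is_QR_def by auto
      have a1: "\<rho> * sum P (T i) \<le> (\<Sum>x\<in>T i. P x * W x i)"
        unfolding sum_distrib_left
      proof (rule sum_mono)
        fix x assume "x \<in> T i"
        then have "x \<in> X" "f x = i" using T1 unfolding preim_def by auto
        then have "\<rho> \<le> W x i" "0 \<le> P x" using W nn unfolding is_QR_def by auto
        then show "\<rho> * P x \<le> P x * W x i" by (metis mult.commute mult_right_mono)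
      qed
      have a2: "(\<Sum>x\<in>\<Lambda>s. P x * W x i) + (\<Sum>x\<in>T i. P x * W x i) = (\<Sum>x\<in>\<Lambda>s \<union> T i. P x * W x i)"
        using fT dj by (simp add: sum.union_disjoint)
      have a3: "(\<Sum>x\<in>\<Lambda>s \<union> T i. P x * W x i) \<le> (\<Sum>x\<in>L. P x * W x i)"
        by (rule sum_mono2[OF finL L(1)]) (use Wnn nn L(2) in auto)
      have a4: "(\<Sum>x\<in>L. P x * W x i) \<le> Max {(\<Sum>x\<in>L. P x * W x i) | L. L \<subseteq> X \<and> card L = l}"
        using Max_props[OF fX lX, of P W i] L by (intro Max_ge) auto
      show ?thesis using a1 a2 a3 a4 by linarith
    qed
    have sW: "(\<Sum>x\<in>\<Lambda>s. P x * W x 0) + (\<Sum>x\<in>\<Lambda>s. P x * W x 1) = sum P \<Lambda>s"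
    proof -
      have "(\<Sum>x\<in>\<Lambda>s. P x * W x 0) + (\<Sum>x\<in>\<Lambda>s. P x * W x 1) = (\<Sum>x\<in>\<Lambda>s. P x * (W x 0 + W x 1))"
        by (simp add: sum.distrib algebra_simps)
      also have "\<dots> = sum P \<Lambda>s"
      proof (rule sum.cong[OF refl])
        fix x assume "x \<in> \<Lambda>s"
        then have "x \<in> X" using Lsub by auto
        then have "W x 0 + W x 1 = 1" using W unfolding is_QR_def sum_Zset by auto
        then show "P x * (W x 0 + W x 1) = P x" by simp
      qed
      finally show ?thesis .
    qed
    have "0 \<in> Zset" "1 \<in> Zset" unfolding Zset_def by auto
    then show ?thesis using bound[of 0] bound[of 1] sW mJ unfolding MW_def sum_Zset
      by (simp add: algebra_simps)
  qed
  define c where "c = max \<rho> (1/2)"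
  define Ws where "Ws = Wc c f"
  have WsQR: "is_addnoise_QR X f \<rho> Ws"
    unfolding is_addnoise_QR_def is_QR_def Ws_def Wc_def sum_Zset
    using assms(5,8,9) unfolding c_def Zset_def by auto
  have UBpair: "(\<Sum>x\<in>L0. P x * Ws x 0) + (\<Sum>x\<in>L1. P x * Ws x 1) \<le> m"
    if L: "L0 \<subseteq> X" "card L0 = l" "L1 \<subseteq> X" "card L1 = l" for L0 L1
  proof (cases "\<rho> \<le> 1/2")
    case True
    then have c: "c = 1/2" unfolding c_def by auto
    have JL: "sum P L \<le> m" if "L \<subseteq> X" "card L = l" for L
    proof -
      have "L \<noteq> X" using that assms(7) by auto
      then have "L \<subset> X" using that(1) by blast
      then have "J L \<le> m" using Jmax that by auto
      moreover have "sum P L + \<rho> * (sum P {} + sum P {}) \<le> J L"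
        unfolding J_def by (rule Jlow[OF fX nn assms(8)]) auto
      ultimately show ?thesis by simp
    qed
    have "(\<Sum>x\<in>L0. P x * Ws x 0) = sum P L0 / 2" "(\<Sum>x\<in>L1. P x * Ws x 1) = sum P L1 / 2"
      unfolding Ws_def Wc_def c by (auto simp: sum_divide_distrib intro!: sum.cong)
    then show ?thesis using JL[OF L(1,2)] JL[OF L(3,4)] by linarith
  next
    case False
    then have c: "c = \<rho>" unfolding c_def by auto
    obtain \<Lambda> B0 B1 where H: "\<Lambda> \<subseteq> X" "card \<Lambda> \<le> card L0" "B0 \<subseteq> preim X f 0 - \<Lambda>" "B1 \<subseteq> preim X f 1 - \<Lambda>"
      "card B0 \<le> card L0 - card \<Lambda>" "card B1 \<le> card L0 - card \<Lambda>"
      "(\<Sum>x\<in>L0. P x * Wc \<rho> f x 0) + (\<Sum>x\<in>L1. P x * Wc \<rho> f x 1)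
         \<le> sum P \<Lambda> + \<rho> * (sum P B0 + sum P B1)"
    proof -
      have "\<exists>\<Lambda> B0 B1. \<Lambda> \<subseteq> X \<and> card \<Lambda> \<le> card L0 \<and> B0 \<subseteq> preim X f 0 - \<Lambda> \<and> B1 \<subseteq> preim X f 1 - \<Lambda>
      \<and> card B0 \<le> card L0 - card \<Lambda> \<and> card B1 \<le> card L0 - card \<Lambda>
      \<and> (\<Sum>x\<in>L0. P x * Wc \<rho> f x 0) + (\<Sum>x\<in>L1. P x * Wc \<rho> f x 1)
         \<le> sum P \<Lambda> + \<rho> * (sum P B0 + sum P B1)"
        by (rule exch[OF fX nn assms(5) _ assms(9) L(1) L(3) _ refl]) (use False L in auto)
      then show ?thesis using that by blast
    qed
    have "\<Lambda> \<noteq> X" using H(2) L(2) assms(7) by auto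
    then have "\<Lambda> \<subset> X" using H(1) by blast
    then have "J \<Lambda> \<le> m" using Jmax H L by auto
    moreover have "sum P \<Lambda> + \<rho> * (sum P B0 + sum P B1) \<le> J \<Lambda>"
      unfolding J_def by (rule Jlow[OF fX nn assms(8) H(3,4)]) (use H L in auto)
    ultimately show ?thesis using H(7) unfolding Ws_def c by linarith
  qed
  have UB: "MW Ws \<le> m"
  proof -
    have ex: "\<exists>L. L \<subseteq> X \<and> card L = l \<and> Max {(\<Sum>x\<in>L. P x * Ws x i) | L. L \<subseteq> X \<and> card L = l} = (\<Sum>x\<in>L. P x * Ws x i)" for i
      using Max_in[OF Max_props[OF fX lX, of P Ws i]] by auto
    obtain L0 where "L0 \<subseteq> X" "card L0 = l" "Max {(\<Sum>x\<in>L. P x * Ws x 0) | L. L \<subseteq> X \<and> card L = l} = (\<Sum>x\<in>L0. P x * Ws x 0)"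
      using ex[of 0] by blast
    moreover obtain L1 where "L1 \<subseteq> X" "card L1 = l" "Max {(\<Sum>x\<in>L. P x * Ws x 1) | L. L \<subseteq> X \<and> card L = l} = (\<Sum>x\<in>L1. P x * Ws x 1)"
      using ex[of 1] by blast
    ultimately show ?thesis using UBpair[of L0 L1] unfolding MW_def sum_Zset by simp
  qed
  have eqW: "list_privacy_W X P l Ws = pi_u X P f l \<rho>"
    using UB LB[of Ws] WsQR unfolding lpW pu is_addnoise_QR_def by auto
  have lp: "list_privacy X P f l \<rho> = pi_u X P f l \<rho>"
    unfolding list_privacy_def
  proof (rule cSup_eq_maximum)
    have "is_QR X f \<rho> Ws" using WsQR unfolding is_addnoise_QR_def by blast
    then show "pi_u X P f l \<rho> \<in> {list_privacy_W X P l W |W. is_QR X f \<rho> W}"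
      using eqW by (metis (mono_tags, lifting) mem_Collect_eq)
  next
    fix x assume "x \<in> {list_privacy_W X P l W |W. is_QR X f \<rho> W}"
    then obtain W where "x = list_privacy_W X P l W" "is_QR X f \<rho> W" by blast
    then show "x \<le> pi_u X P f l \<rho>" using LB[of W] unfolding lpW pu by simp
  qed
  have ex: "\<exists>W. is_addnoise_QR X f \<rho> W \<and> list_privacy_W X P l W = list_privacy X P f l \<rho>"
    using WsQR eqW lp by (intro exI[of _ Ws]) simp
  show ?thesis by (rule conjI[OF lp conjI[OF part2 ex]])
qed

end
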